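(* Let $G$ be a topological group and let $G'$ be a separated topological group, with separated completions $c\colon G\to\widehat{G}$ and $c'\colon G'\to\widehat{G'}$. Let $f_n\colon G\to G'$, $n\in\mathbb{N}$, be a sequence of homomorphisms of topological groups, let $\widetilde{f}_n=c'\circ f_n\colon G\to\widehat{G'}$, and let $\widehat{f}_n\colon\widehat{G}\to\widehat{G'}$ be the unique homomorphisms of topological groups with $\widehat{f}_n\circ c=\widetilde{f}_n$. If $(f_n)_n$ converges continuously to a homomorphism $f\colon G\to G'$, then $(\widetilde{f}_n)_n$ converges continuously to the homomorphism of topological groups $\widetilde{f}=c'\circ f$ and $(\widehat{f}_n)_n$ converges continuously to the homomorphism of topological groups $\widehat{f}\colon\widehat{G}\to\widehat{G'}$ determined by $\widehat{f}\circ c=\widetilde{f}$.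
   Context: Topological groups are abelian groups with a linear topology admitting a countable fundamental system of neighbourhoods of $0$ consisting of open subgroups; homomorphisms of topological groups are continuous; separated means Hausdorff. The separated completion of $G$ is $\widehat{G}=\varprojlim_HG/H$ over open subgroups $H$ (each $G/H$ discrete), with inverse limit topology and canonical map $c$; every continuous homomorphism from $G$ to a complete group factors uniquely through $c$. A sequence of homomorphisms $f_n$ converges continuously to $f$ if every $f_n$ is continuous and for every $g\in G$ and open subgroup $H'$ of the target there exist an open subgroup $H$ of $G$ and $n_0$ such that $f_n(g+x)-f(g+x)\in H'$ for all $x\in H$, $n\ge n_0$. *)

theory Defs
  imports "HOL-Analysis.Analysis" "HOL-Algebra.Coset"
begin

definition open_subgroups :: "('a,'b) monoid_scheme \<Rightarrow> 'a topology \<Rightarrow> 'a set set" where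
  "open_subgroups G T = {H. subgroup H G \<and> openin T H}"

text \<open>Linear topology with a countable fundamental system of neighbourhoods of the
identity consisting of open subgroups: a set is open iff it contains, with each of its
points x, a translate H x of some open subgroup H; and there is a sequence of open
subgroups cofinal among all open subgroups (hence among all neighbourhoods of 1).\<close>

definition lin_top_group :: "('a,'b) monoid_scheme \<Rightarrow> 'a topology \<Rightarrow> bool" where
  "lin_top_group G T \<longleftrightarrow>
     comm_group G \<and> topspace T = carrier G \<and>
     (\<forall>U. openin T U \<longleftrightarrow>
          U \<subseteq> carrier G \<and> (\<forall>x\<in>U. \<exists>H\<in>open_subgroups G T. H #>\<^bsub>G\<^esub> x \<subseteq> U)) \<and>
     (\<exists>B :: nat \<Rightarrow> 'a set. range B \<subseteq> open_subgroups G T \<and>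
          (\<forall>H\<in>open_subgroups G T. \<exists>n. B n \<subseteq> H))"

definition top_hom ::
  "('a,'c) monoid_scheme \<Rightarrow> 'a topology \<Rightarrow> ('b,'d) monoid_scheme \<Rightarrow> 'b topology
     \<Rightarrow> ('a \<Rightarrow> 'b) \<Rightarrow> bool" where
  "top_hom G T G' T' f \<longleftrightarrow> f \<in> hom G G' \<and> continuous_map T T' f"

text \<open>Separated completion: the inverse limit of the discrete groups G/H over open
subgroups H, as a subgroup of the product, with the induced (inverse limit) topology.\<close>

definition compl_carrier :: "('a,'c) monoid_scheme \<Rightarrow> 'a topology \<Rightarrow> ('a set \<Rightarrow> 'a set) set" where
  "compl_carrier G T =
     {x \<in> (\<Pi>\<^sub>E H\<in>open_subgroups G T. rcosets\<^bsub>G\<^esub> H).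
        \<forall>H\<in>open_subgroups G T. \<forall>K\<in>open_subgroups G T. K \<subseteq> H \<longrightarrow> x K \<subseteq> x H}"

definition compl :: "('a,'c) monoid_scheme \<Rightarrow> 'a topology \<Rightarrow> ('a set \<Rightarrow> 'a set) monoid" where
  "compl G T =
     \<lparr>carrier = compl_carrier G T,
      mult = (\<lambda>x y. \<lambda>H\<in>open_subgroups G T. x H <#>\<^bsub>G\<^esub> y H),
      one = (\<lambda>H\<in>open_subgroups G T. H)\<rparr>"

definition compl_top :: "('a,'c) monoid_scheme \<Rightarrow> 'a topology \<Rightarrow> ('a set \<Rightarrow> 'a set) topology" where
  "compl_top G T =
     subtopology
       (product_topology (\<lambda>H. discrete_topology (rcosets\<^bsub>G\<^esub> H)) (open_subgroups G T))
       (compl_carrier G T)"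

definition compl_map :: "('a,'c) monoid_scheme \<Rightarrow> 'a topology \<Rightarrow> 'a \<Rightarrow> ('a set \<Rightarrow> 'a set)" where
  "compl_map G T g = (\<lambda>H\<in>open_subgroups G T. H #>\<^bsub>G\<^esub> g)"

definition conv_cont ::
  "('a,'c) monoid_scheme \<Rightarrow> 'a topology \<Rightarrow> ('b,'d) monoid_scheme \<Rightarrow> 'b topology
     \<Rightarrow> (nat \<Rightarrow> 'a \<Rightarrow> 'b) \<Rightarrow> ('a \<Rightarrow> 'b) \<Rightarrow> bool" where
  "conv_cont G T G' T' fs f \<longleftrightarrow>
     (\<forall>n. top_hom G T G' T' (fs n)) \<and>
     (\<forall>g\<in>carrier G. \<forall>H'\<in>open_subgroups G' T'. \<exists>H\<in>open_subgroups G T. \<exists>n0.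
        \<forall>x\<in>H. \<forall>n\<ge>n0. fs n (g \<otimes>\<^bsub>G\<^esub> x) \<otimes>\<^bsub>G'\<^esub> inv\<^bsub>G'\<^esub> (f (g \<otimes>\<^bsub>G\<^esub> x)) \<in> H')"

end

theory Submission
  imports Defs
begin

locale ltg = comm_group G for G :: "('a,'c) monoid_scheme" (structure) +
  fixes T :: "'a topology"
  assumes ltg: "lin_top_group G T"
begin

abbreviation "OS \<equiv> open_subgroups G T"
abbreviation "CC \<equiv> compl_carrier G T"
abbreviation "CG \<equiv> compl G T"
abbreviation "cm \<equiv> compl_map G T"
abbreviation "CT \<equiv> compl_top G T"

lemma topT: "topspace T = carrier G" using ltg by (simp add: lin_top_group_def)

lemma open_iff_all: "\<forall>U. openin T U \<longleftrightarrow> U \<subseteq> carrier G \<and> (\<forall>x\<in>U. \<exists>H\<in>OS. H #> x \<subseteq> U)"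
  using ltg unfolding lin_top_group_def by (elim conjE) assumption

lemma open_iff: "openin T U \<longleftrightarrow> U \<subseteq> carrier G \<and> (\<forall>x\<in>U. \<exists>H\<in>OS. H #> x \<subseteq> U)"
  using open_iff_all by (rule spec)

lemma OS_D: assumes "H \<in> OS" shows "subgroup H G" "openin T H" "H \<subseteq> carrier G"
  using assms by (auto simp: open_subgroups_def subgroup.subset)

lemma OS_normal: "H \<in> OS \<Longrightarrow> H \<lhd> G" using OS_D subgroup_imp_normal by blast

lemma carrier_OS: "carrier G \<in> OS"
  using subgroup_self openin_topspace[of T] topT by (simp add: open_subgroups_def)

lemma OS_Int: "H \<in> OS \<Longrightarrow> K \<in> OS \<Longrightarrow> H \<inter> K \<in> OS"
  unfolding open_subgroups_def using subgroups_Inter_pair by auto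

lemma OS_Inter: "finite F \<Longrightarrow> F \<subseteq> OS \<Longrightarrow> carrier G \<inter> \<Inter>F \<in> OS"
proof (induction F rule: finite_induct)
  case empty then show ?case using carrier_OS by simp
next
  case (insert a F)
  have "carrier G \<inter> \<Inter>(insert a F) = a \<inter> (carrier G \<inter> \<Inter>F)" by auto
  moreover have "a \<in> OS" "carrier G \<inter> \<Inter>F \<in> OS" using insert by auto
  ultimately show ?case using OS_Int by simp
qed

lemma CC_D: assumes "z \<in> CC" "H \<in> OS" shows "z H \<in> rcosets H"
  using assms unfolding compl_carrier_def by (auto simp: PiE_iff)

lemma CC_ext: "z \<in> CC \<Longrightarrow> z \<in> extensional OS"
  unfolding compl_carrier_def by (auto simp: PiE_iff)

lemma CC_mono: "z \<in> CC \<Longrightarrow> K \<in> OS \<Longrightarrow> H \<in> OS \<Longrightarrow> K \<subseteq> H \<Longrightarrow> z K \<subseteq> z H"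
  unfolding compl_carrier_def by auto

lemma CC_rep: assumes "z \<in> CC" "H \<in> OS" obtains v where "v \<in> carrier G" "z H = H #> v"
  using CC_D[OF assms] unfolding RCOSETS_def by auto

lemma CC_elem: assumes "z \<in> CC" "H \<in> OS" "v \<in> z H" shows "z H = H #> v"
proof -
  obtain r where r: "r \<in> carrier G" "z H = H #> r" using CC_rep assms by blast
  then show ?thesis using repr_independence[of v H r, OF _ r(1) OS_D(1)[OF assms(2)]] assms(3) by simp
qed

lemma CC_agree: assumes "z \<in> CC" "w \<in> CC" "K \<in> OS" "H \<in> OS" "K \<subseteq> H" "z K = w K"
  shows "z H = w H"
proof -
  obtain v where v: "v \<in> carrier G" "z K = K #> v" using CC_rep assms by blast
  have "v \<in> z K" using rcos_self OS_D v assms by auto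
  have v1: "v \<in> z H" using CC_mono[OF assms(1,3,4,5)] \<open>v \<in> z K\<close> by blast
  have v2: "v \<in> w H" using CC_mono[OF assms(2,3,4,5)] \<open>v \<in> z K\<close> assms(6) by blast
  show ?thesis using CC_elem[OF assms(1,4) v1] CC_elem[OF assms(2,4) v2] by simp
qed

lemma cm_app: "H \<in> OS \<Longrightarrow> cm g H = H #> g" by (simp add: compl_map_def)

lemma cm_CC: assumes "g \<in> carrier G" shows "cm g \<in> CC"
proof -
  have "(\<lambda>H\<in>OS. H #> g) \<in> (\<Pi>\<^sub>E H\<in>OS. rcosets H)" using assms by (auto intro: rcosetsI dest: OS_D(3))
  moreover have "\<forall>H\<in>OS. \<forall>K\<in>OS. K \<subseteq> H \<longrightarrow> (\<lambda>H\<in>OS. H #> g) K \<subseteq> (\<lambda>H\<in>OS. H #> g) H"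
    by (auto simp: r_coset_def)
  ultimately show ?thesis unfolding compl_carrier_def compl_map_def mem_Collect_eq by (rule conjI)
qed

lemma C_mult: "H \<in> OS \<Longrightarrow> (x \<otimes>\<^bsub>CG\<^esub> y) H = x H <#> y H" by (simp add: compl_def)
lemma C_mult': "x \<otimes>\<^bsub>CG\<^esub> y = (\<lambda>H\<in>OS. x H <#> y H)" by (simp add: compl_def)
lemma C_one: "\<one>\<^bsub>CG\<^esub> = (\<lambda>H\<in>OS. H)" by (simp add: compl_def)
lemma C_carrier: "carrier CG = CC" by (simp add: compl_def)

lemma coset_mult: "H \<in> OS \<Longrightarrow> a \<in> carrier G \<Longrightarrow> b \<in> carrier G \<Longrightarrow> (H #> a) <#> (H #> b) = H #> (a \<otimes> b)"
  by (rule normal.rcos_sum[OF OS_normal])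

lemma setinv_mono: "A \<subseteq> B \<Longrightarrow> set_inv A \<subseteq> set_inv B"
  unfolding SET_INV_def by auto

lemma C_mult_CC: assumes "x \<in> CC" "y \<in> CC" shows "(\<lambda>H\<in>OS. x H <#> y H) \<in> CC"
  unfolding compl_carrier_def
proof (intro CollectI conjI ballI impI)
  show "(\<lambda>H\<in>OS. x H <#> y H) \<in> (\<Pi>\<^sub>E H\<in>OS. rcosets H)"
    using assms CC_D normal.setmult_closed[OF OS_normal] by auto
  fix H K assume "H \<in> OS" "K \<in> OS" "K \<subseteq> H"
  moreover have "x K \<subseteq> x H" "y K \<subseteq> y H" using CC_mono[of x K H] CC_mono[of y K H] assms calculation by auto
  ultimately show "(\<lambda>H\<in>OS. x H <#> y H) K \<subseteq> (\<lambda>H\<in>OS. x H <#> y H) H"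
    using mono_set_mult[of "x K" "x H" "y K" "y H" G] by simp
qed

lemma C_inv_CC: assumes "x \<in> CC" shows "(\<lambda>H\<in>OS. set_inv (x H)) \<in> CC"
  unfolding compl_carrier_def
proof (intro CollectI conjI ballI impI)
  show "(\<lambda>H\<in>OS. set_inv (x H)) \<in> (\<Pi>\<^sub>E H\<in>OS. rcosets H)"
    using assms CC_D normal.setinv_closed[OF OS_normal] by auto
  fix H K assume "H \<in> OS" "K \<in> OS" "K \<subseteq> H"
  then show "(\<lambda>H\<in>OS. set_inv (x H)) K \<subseteq> (\<lambda>H\<in>OS. set_inv (x H)) H"
    using assms CC_mono setinv_mono by auto
qed

lemma one_CC: "(\<lambda>H\<in>OS. H) \<in> CC"
  unfolding compl_carrier_def
  using subgroup.subgroup_in_rcosets[OF OS_D(1)] is_group by auto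

lemma C_comm_group: "comm_group CG"
proof (rule comm_groupI)
  fix x y assume "x \<in> carrier CG" "y \<in> carrier CG"
  then show "x \<otimes>\<^bsub>CG\<^esub> y \<in> carrier CG" using C_mult_CC by (simp add: C_carrier C_mult')
next
  show "\<one>\<^bsub>CG\<^esub> \<in> carrier CG" using one_CC by (simp add: C_carrier C_one)
next
  fix x y z assume a: "x \<in> carrier CG" "y \<in> carrier CG" "z \<in> carrier CG"
  show "x \<otimes>\<^bsub>CG\<^esub> y \<otimes>\<^bsub>CG\<^esub> z = x \<otimes>\<^bsub>CG\<^esub> (y \<otimes>\<^bsub>CG\<^esub> z)"
  proof
    fix H show "(x \<otimes>\<^bsub>CG\<^esub> y \<otimes>\<^bsub>CG\<^esub> z) H = (x \<otimes>\<^bsub>CG\<^esub> (y \<otimes>\<^bsub>CG\<^esub> z)) H"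
      using a CC_D normal.rcosets_assoc[OF OS_normal]
      by (cases "H \<in> OS") (auto simp: C_mult' C_carrier)
  qed
next
  fix x y assume a: "x \<in> carrier CG" "y \<in> carrier CG"
  show "x \<otimes>\<^bsub>CG\<^esub> y = y \<otimes>\<^bsub>CG\<^esub> x"
  proof
    fix H show "(x \<otimes>\<^bsub>CG\<^esub> y) H = (y \<otimes>\<^bsub>CG\<^esub> x) H"
    proof (cases "H \<in> OS")
      case True
      have "x \<in> CC" "y \<in> CC" using a by (auto simp: C_carrier)
      then show ?thesis using set_mult_commute[OF OS_D(3)[OF True] CC_D[of x H] CC_D[of y H]] True
        by (simp add: C_mult')
    qed (auto simp: C_mult')
  qed
next
  fix x assume a: "x \<in> carrier CG"
  show "\<one>\<^bsub>CG\<^esub> \<otimes>\<^bsub>CG\<^esub> x = x"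
  proof
    fix H show "(\<one>\<^bsub>CG\<^esub> \<otimes>\<^bsub>CG\<^esub> x) H = x H"
      using a CC_D normal.rcosets_mult_eq[OF OS_normal] CC_ext[of x]
      by (cases "H \<in> OS") (auto simp: C_mult' C_carrier C_one extensional_def)
  qed
next
  fix x assume a: "x \<in> carrier CG"
  show "\<exists>y\<in>carrier CG. y \<otimes>\<^bsub>CG\<^esub> x = \<one>\<^bsub>CG\<^esub>"
  proof (intro bexI)
    show "(\<lambda>H\<in>OS. set_inv (x H)) \<in> carrier CG" using C_inv_CC a by (simp add: C_carrier)
    show "(\<lambda>H\<in>OS. set_inv (x H)) \<otimes>\<^bsub>CG\<^esub> x = \<one>\<^bsub>CG\<^esub>"
    proof
      fix H show "((\<lambda>H\<in>OS. set_inv (x H)) \<otimes>\<^bsub>CG\<^esub> x) H = \<one>\<^bsub>CG\<^esub> H"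
        using a CC_D normal.rcosets_inv_mult_group_eq[OF OS_normal]
        by (cases "H \<in> OS") (auto simp: C_mult' C_carrier C_one)
    qed
  qed
qed

lemma C_inv: assumes "x \<in> CC" shows "inv\<^bsub>CG\<^esub> x = (\<lambda>H\<in>OS. set_inv (x H))"
proof -
  interpret C: comm_group CG by (rule C_comm_group)
  show ?thesis
  proof (rule C.inv_equality)
    show "(\<lambda>H\<in>OS. set_inv (x H)) \<otimes>\<^bsub>CG\<^esub> x = \<one>\<^bsub>CG\<^esub>"
    proof
      fix H show "((\<lambda>H\<in>OS. set_inv (x H)) \<otimes>\<^bsub>CG\<^esub> x) H = \<one>\<^bsub>CG\<^esub> H"
        using assms CC_D normal.rcosets_inv_mult_group_eq[OF OS_normal]
        by (cases "H \<in> OS") (auto simp: C_mult' C_carrier C_one)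
    qed
  qed (use assms C_inv_CC in \<open>auto simp: C_carrier\<close>)
qed

lemma diff_coord: assumes "w1 \<in> CC" "w2 \<in> CC" "K \<in> OS"
  shows "(w1 \<otimes>\<^bsub>CG\<^esub> inv\<^bsub>CG\<^esub> w2) K = K \<longleftrightarrow> w1 K = w2 K"
proof -
  obtain a where a: "a \<in> carrier G" "w1 K = K #> a" using CC_rep assms by blast
  obtain b where b: "b \<in> carrier G" "w2 K = K #> b" using CC_rep assms by blast
  have "(w1 \<otimes>\<^bsub>CG\<^esub> inv\<^bsub>CG\<^esub> w2) K = (K #> a) <#> set_inv (K #> b)"
    using assms a b by (simp add: C_inv C_mult)
  also have "\<dots> = K #> (a \<otimes> inv b)"
    using normal.rcos_inv[OF OS_normal[OF assms(3)] b(1)] coset_mult assms a b by simp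
  finally have e: "(w1 \<otimes>\<^bsub>CG\<^esub> inv\<^bsub>CG\<^esub> w2) K = K #> (a \<otimes> inv b)" .
  have sg: "subgroup K G" using OS_D assms by blast
  have "K #> (a \<otimes> inv b) = K \<longleftrightarrow> a \<otimes> inv b \<in> K"
    using coset_join1[of K "a \<otimes> inv b"] coset_join2[of "a \<otimes> inv b" K] sg a b by auto
  also have "\<dots> \<longleftrightarrow> a \<in> K #> b" using subgroup.rcos_module[OF sg is_group b(1) a(1)] by simp
  also have "\<dots> \<longleftrightarrow> K #> a = K #> b"
    using repr_independence[of a K b] rcos_self[of a K] sg a b by auto
  finally have X: "K #> (a \<otimes> inv b) = K \<longleftrightarrow> K #> a = K #> b" .
  show ?thesis by (simp only: e a(2) b(2) X)
qed

lemma cm_hom: "cm \<in> hom G CG"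
proof (rule homI)
  fix x assume "x \<in> carrier G" then show "cm x \<in> carrier CG" using cm_CC by (simp add: C_carrier)
next
  fix x y assume a: "x \<in> carrier G" "y \<in> carrier G"
  show "cm (x \<otimes> y) = cm x \<otimes>\<^bsub>CG\<^esub> cm y"
  proof
    fix H show "cm (x \<otimes> y) H = (cm x \<otimes>\<^bsub>CG\<^esub> cm y) H"
    proof (cases "H \<in> OS")
      case True
      then show ?thesis using a coset_mult[OF True a] by (simp add: C_mult' compl_map_def)
    qed (simp add: C_mult' compl_map_def)
  qed
qed


lemma CT_top: "topspace CT = CC"
proof -
  have "CC \<subseteq> (\<Pi>\<^sub>E H\<in>OS. rcosets H)" unfolding compl_carrier_def by (rule Collect_subset)
  then show ?thesis unfolding compl_top_def by (auto simp: topspace_subtopology)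
qed

lemma proj_cont: "K \<in> OS \<Longrightarrow> continuous_map CT (discrete_topology (rcosets K)) (\<lambda>w. w K)"
  unfolding compl_top_def
  by (rule continuous_map_from_subtopology) (rule continuous_map_product_projection[where X="\<lambda>H. discrete_topology (rcosets H)", simplified])

lemma proj_open: assumes K: "K \<in> OS" shows "openin CT {w\<in>CC. w K = A}"
proof -
  have "openin CT {w \<in> topspace CT. w K \<in> {A} \<inter> rcosets K}"
    by (rule openin_continuous_map_preimage[OF proj_cont[OF K]]) simp
  moreover have "{w \<in> topspace CT. w K \<in> {A} \<inter> rcosets K} = {w\<in>CC. w K = A}"
    using CC_D[OF _ K] CT_top by auto
  ultimately show ?thesis by simp
qed

lemma nbhd: assumes "openin CT U" "z \<in> U" shows "\<exists>H\<in>OS. \<forall>w\<in>CC. w H = z H \<longrightarrow> w \<in> U"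
proof -
  from assms(1) obtain S where S: "openin (product_topology (\<lambda>H. discrete_topology (rcosets H)) OS) S" "U = S \<inter> CC"
    unfolding compl_top_def openin_subtopology by blast
  have zS: "z \<in> S" "z \<in> CC" using S assms by auto
  obtain V where V: "finite {i\<in>OS. V i \<noteq> rcosets i}" "z \<in> Pi\<^sub>E OS V" "Pi\<^sub>E OS V \<subseteq> S"
    using S(1) zS(1) unfolding openin_product_topology_alt by force
  define F where "F = {i\<in>OS. V i \<noteq> rcosets i}"
  define H where "H = carrier G \<inter> \<Inter>F"
  have H: "H \<in> OS" using OS_Inter[of F] V(1) unfolding F_def H_def by auto
  have HF: "H \<subseteq> i" if "i\<in>F" for i using that H_def by auto
  show ?thesis
  proof (intro bexI ballI impI)
    fix w assume w: "w\<in>CC" "w H = z H"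
    have "w \<in> Pi\<^sub>E OS V"
    proof (rule PiE_I)
      fix i assume i: "i\<in>OS"
      show "w i \<in> V i"
      proof (cases "i \<in> F")
        case True
        have "w i = z i" using CC_agree[OF w(1) zS(2) H i HF[OF True] w(2)] .
        then show ?thesis using V(2) i by (auto simp: PiE_iff)
      next
        case False then have "V i = rcosets i" using i F_def by auto
        then show ?thesis using CC_D[OF w(1) i] by simp
      qed
    next
      fix i assume "i \<notin> OS" then show "w i = undefined" using CC_ext[OF w(1)] by (auto simp: extensional_def)
    qed
    then show "w \<in> U" using V(3) S(2) w by auto
  qed (rule H)
qed

lemma cont_into:
  assumes "\<forall>x\<in>topspace X. \<phi> x \<in> CC"
    and "\<forall>K\<in>OS. \<forall>x\<in>topspace X. openin X {y\<in>topspace X. \<phi> y K = \<phi> x K}"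
  shows "continuous_map X CT \<phi>"
proof -
  have "continuous_map X (product_topology (\<lambda>H. discrete_topology (rcosets H)) OS) \<phi>"
    unfolding continuous_map_componentwise
  proof (intro conjI ballI)
    show "\<phi> ` topspace X \<subseteq> extensional OS" using assms(1) CC_ext by auto
    fix K assume K: "K\<in>OS"
    show "continuous_map X (discrete_topology (rcosets K)) (\<lambda>x. \<phi> x K)"
      unfolding continuous_map_def
    proof (intro conjI allI impI)
      show "(\<lambda>x. \<phi> x K) \<in> topspace X \<rightarrow> topspace (discrete_topology (rcosets K))"
        using assms(1) CC_D K by auto
      fix U assume "openin (discrete_topology (rcosets K)) U"
      show "openin X {x \<in> topspace X. \<phi> x K \<in> U}"
      proof (subst openin_subopen, intro ballI)
        fix x assume x: "x \<in> {x \<in> topspace X. \<phi> x K \<in> U}"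
        show "\<exists>T. openin X T \<and> x \<in> T \<and> T \<subseteq> {x \<in> topspace X. \<phi> x K \<in> U}"
        proof (intro exI conjI)
          show "openin X {y\<in>topspace X. \<phi> y K = \<phi> x K}" using assms(2) K x by blast
        qed (use x in auto)
      qed
    qed
  qed
  then show ?thesis unfolding compl_top_def continuous_map_in_subtopology using assms(1) by auto
qed

lemma cm_cont: "continuous_map T CT cm"
proof (rule cont_into)
  show "\<forall>x\<in>topspace T. cm x \<in> CC" using cm_CC topT by auto
  show "\<forall>K\<in>OS. \<forall>x\<in>topspace T. openin T {y \<in> topspace T. cm y K = cm x K}"
  proof (intro ballI)
    fix K x assume K: "K \<in> OS" and x: "x \<in> topspace T"
    have sg: "subgroup K G" using OS_D K by blast
    have e: "{y \<in> topspace T. cm y K = cm x K} = {y \<in> carrier G. K #> y = K #> x}"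
      using K topT by (simp add: cm_app)
    show "openin T {y \<in> topspace T. cm y K = cm x K}"
      unfolding e open_iff
    proof (intro conjI ballI)
      fix y assume y: "y \<in> {y \<in> carrier G. K #> y = K #> x}"
      show "\<exists>H\<in>OS. H #> y \<subseteq> {y \<in> carrier G. K #> y = K #> x}"
      proof (intro bexI subsetI)
        fix y' assume y': "y' \<in> K #> y"
        have "y' \<in> carrier G" using y' y sg subgroup.elemrcos_carrier[OF sg is_group] by blast
        moreover have "K #> y = K #> y'" using repr_independence[OF y' _ sg] y by blast
        ultimately show "y' \<in> {y \<in> carrier G. K #> y = K #> x}" using y by simp
      qed (rule K)
    qed auto
  qed
qed


lemma coset_eq_iff: assumes "K \<in> OS" "a \<in> carrier G" "b \<in> carrier G"
  shows "K #> a = K #> b \<longleftrightarrow> a \<otimes> inv b \<in> K"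
proof -
  have sg: "subgroup K G" using OS_D assms by blast
  have "a \<otimes> inv b \<in> K \<longleftrightarrow> a \<in> K #> b" using subgroup.rcos_module[OF sg is_group assms(3,2)] by simp
  also have "\<dots> \<longleftrightarrow> K #> a = K #> b"
    using repr_independence[of a K b] rcos_self[of a K] sg assms by auto
  finally show ?thesis by simp
qed

lemma cm_eq_iff: assumes "K \<in> OS" "a \<in> carrier G" "b \<in> carrier G"
  shows "cm a K = cm b K \<longleftrightarrow> a \<otimes> inv b \<in> K"
  using coset_eq_iff[OF assms] assms(1) by (simp add: cm_app)

lemma setinv_sub: assumes "H \<in> OS" shows "set_inv H = H"
proof -
  have "set_inv (H #> \<one>) = H #> inv \<one>" by (rule normal.rcos_inv[OF OS_normal[OF assms]]) simp
  then show ?thesis using coset_mult_one[OF OS_D(3)[OF assms]] by simp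
qed

lemma V_OS: assumes H: "H \<in> OS" shows "{y\<in>CC. y H = H} \<in> open_subgroups CG CT"
proof -
  interpret C: comm_group CG by (rule C_comm_group)
  have "subgroup {y\<in>CC. y H = H} CG"
  proof (rule C.subgroupI)
    show "{y \<in> CC. y H = H} \<subseteq> carrier CG" by (auto simp: C_carrier)
    show "{y \<in> CC. y H = H} \<noteq> {}" using one_CC H by auto
  next
    fix a assume a: "a \<in> {y \<in> CC. y H = H}"
    then show "inv\<^bsub>CG\<^esub> a \<in> {y \<in> CC. y H = H}"
      using C_inv[of a] C_inv_CC[of a] setinv_sub[OF H] H by auto
  next
    fix a b assume a: "a \<in> {y \<in> CC. y H = H}" and b: "b \<in> {y \<in> CC. y H = H}"
    then show "a \<otimes>\<^bsub>CG\<^esub> b \<in> {y \<in> CC. y H = H}"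
      using C_mult_CC[of a b] C_mult'[of a b] subgroup_mult_id[OF OS_D(1)[OF H]] H by auto
  qed
  moreover have "openin CT {y\<in>CC. y H = H}" by (rule proj_open[OF H])
  ultimately show ?thesis unfolding open_subgroups_def by simp
qed

end

lemma hom_cont_iff:
  assumes A: "ltg G T" and B: "ltg G2 T2" and h: "\<phi> \<in> hom G G2"
  shows "continuous_map T T2 \<phi> \<longleftrightarrow> (\<forall>K\<in>open_subgroups G2 T2. \<exists>H\<in>open_subgroups G T. \<phi> ` H \<subseteq> K)"
proof -
  interpret A: ltg G T by (rule A)
  interpret B: ltg G2 T2 by (rule B)
  interpret gh: group_hom G G2 \<phi> by (unfold_locales) (rule h)
  show ?thesis
  proof
    assume c: "continuous_map T T2 \<phi>"
    show "\<forall>K\<in>open_subgroups G2 T2. \<exists>H\<in>open_subgroups G T. \<phi> ` H \<subseteq> K"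
    proof
      fix K assume K: "K \<in> open_subgroups G2 T2"
      have "openin T {x \<in> topspace T. \<phi> x \<in> K}"
        by (rule openin_continuous_map_preimage[OF c B.OS_D(2)[OF K]])
      moreover have "\<one>\<^bsub>G\<^esub> \<in> {x \<in> topspace T. \<phi> x \<in> K}"
        using A.topT subgroup.one_closed[OF B.OS_D(1)[OF K]] by simp
      ultimately obtain H where H: "H \<in> open_subgroups G T" "H #>\<^bsub>G\<^esub> \<one>\<^bsub>G\<^esub> \<subseteq> {x \<in> topspace T. \<phi> x \<in> K}"
        unfolding A.open_iff by blast
      have "H #>\<^bsub>G\<^esub> \<one>\<^bsub>G\<^esub> = H" using A.coset_mult_one A.OS_D(3)[OF H(1)] by blast
      then show "\<exists>H\<in>open_subgroups G T. \<phi> ` H \<subseteq> K" using H by blast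
    qed
  next
    assume R: "\<forall>K\<in>open_subgroups G2 T2. \<exists>H\<in>open_subgroups G T. \<phi> ` H \<subseteq> K"
    show "continuous_map T T2 \<phi>"
      unfolding continuous_map_def
    proof (intro conjI allI impI)
      show "\<phi> \<in> topspace T \<rightarrow> topspace T2" using A.topT B.topT by auto
      fix U assume U: "openin T2 U"
      have e: "{x \<in> topspace T. \<phi> x \<in> U} = {x \<in> carrier G. \<phi> x \<in> U}" using A.topT by simp
      show "openin T {x \<in> topspace T. \<phi> x \<in> U}"
        unfolding e A.open_iff
      proof (intro conjI ballI)
        fix x assume x: "x \<in> {x \<in> carrier G. \<phi> x \<in> U}"
        obtain K where K: "K \<in> open_subgroups G2 T2" "K #>\<^bsub>G2\<^esub> \<phi> x \<subseteq> U"
          using U x unfolding B.open_iff by blast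
        obtain H where H: "H \<in> open_subgroups G T" "\<phi> ` H \<subseteq> K" using R K(1) by blast
        show "\<exists>H\<in>open_subgroups G T. H #>\<^bsub>G\<^esub> x \<subseteq> {x \<in> carrier G. \<phi> x \<in> U}"
        proof (intro bexI subsetI)
          fix y assume y: "y \<in> H #>\<^bsub>G\<^esub> x"
          then obtain h where hy: "h \<in> H" "y = h \<otimes>\<^bsub>G\<^esub> x" unfolding r_coset_def by blast
          have hc: "h \<in> carrier G" using hy A.OS_D(3)[OF H(1)] by blast
          have xc: "x \<in> carrier G" using x by simp
          have "\<phi> y = \<phi> h \<otimes>\<^bsub>G2\<^esub> \<phi> x" using hy hc xc by simp
          moreover have "\<phi> h \<in> K" using H hy by blast
          ultimately have "\<phi> y \<in> K #>\<^bsub>G2\<^esub> \<phi> x" unfolding r_coset_def by blast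
          then show "y \<in> {x \<in> carrier G. \<phi> x \<in> U}" using K(2) hy hc xc by auto
        qed (rule H(1))
      qed auto
    qed
  qed
qed


lemma ltgI: "lin_top_group G T \<Longrightarrow> ltg G T"
proof -
  assume a: "lin_top_group G T"
  have "comm_group G" using a unfolding lin_top_group_def by (elim conjE)
  then show "ltg G T" by (rule ltg.intro) (rule ltg_axioms.intro[OF a])
qed

lemma conv_f_cont:
  assumes A: "ltg G T" and B: "ltg G2 T2" and h: "f \<in> hom G G2"
    and conv: "conv_cont G T G2 T2 fs f"
  shows "continuous_map T T2 f"
proof -
  interpret A: ltg G T by (rule A)
  interpret B: ltg G2 T2 by (rule B)
  have th: "\<And>n. top_hom G T G2 T2 (fs n)" using conv unfolding conv_cont_def by blast
  have cv: "\<forall>g\<in>carrier G. \<forall>H'\<in>open_subgroups G2 T2. \<exists>H\<in>open_subgroups G T. \<exists>n0.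
        \<forall>x\<in>H. \<forall>n\<ge>n0. fs n (g \<otimes>\<^bsub>G\<^esub> x) \<otimes>\<^bsub>G2\<^esub> inv\<^bsub>G2\<^esub> (f (g \<otimes>\<^bsub>G\<^esub> x)) \<in> H'"
    using conv unfolding conv_cont_def by (elim conjE)
  show ?thesis unfolding hom_cont_iff[OF A B h]
  proof
    fix K assume K: "K \<in> open_subgroups G2 T2"
    obtain H n0 where H: "H \<in> open_subgroups G T"
      and Hn: "\<forall>x\<in>H. \<forall>n\<ge>n0. fs n (\<one>\<^bsub>G\<^esub> \<otimes>\<^bsub>G\<^esub> x) \<otimes>\<^bsub>G2\<^esub> inv\<^bsub>G2\<^esub> (f (\<one>\<^bsub>G\<^esub> \<otimes>\<^bsub>G\<^esub> x)) \<in> K"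
      using cv K by (meson A.one_closed)
    have hn0: "fs n0 \<in> hom G G2" and cn0: "continuous_map T T2 (fs n0)" using th unfolding top_hom_def by auto
    obtain H1 where H1: "H1 \<in> open_subgroups G T" "fs n0 ` H1 \<subseteq> K"
      using cn0 K unfolding hom_cont_iff[OF A B hn0] by blast
    show "\<exists>H\<in>open_subgroups G T. f ` H \<subseteq> K"
    proof (intro bexI subsetI)
      fix y assume "y \<in> f ` (H \<inter> H1)"
      then obtain x where x: "x \<in> H" "x \<in> H1" "y = f x" by blast
      have xc: "x \<in> carrier G" using x A.OS_D(3)[OF H] by blast
      have sK: "subgroup K G2" using B.OS_D(1)[OF K] .
      have a: "fs n0 x \<in> K" using H1 x by blast
      have d: "fs n0 x \<otimes>\<^bsub>G2\<^esub> inv\<^bsub>G2\<^esub> (f x) \<in> K" using Hn x xc by auto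
      have ac: "fs n0 x \<in> carrier G2" using hn0 xc by (rule hom_in_carrier)
      have fc: "f x \<in> carrier G2" using h xc by (rule hom_in_carrier)
      have "inv\<^bsub>G2\<^esub> (fs n0 x \<otimes>\<^bsub>G2\<^esub> inv\<^bsub>G2\<^esub> (f x)) \<otimes>\<^bsub>G2\<^esub> fs n0 x \<in> K"
        using subgroup.m_closed[OF sK subgroup.m_inv_closed[OF sK d] a] .
      moreover have "inv\<^bsub>G2\<^esub> (fs n0 x \<otimes>\<^bsub>G2\<^esub> inv\<^bsub>G2\<^esub> (f x)) \<otimes>\<^bsub>G2\<^esub> fs n0 x = f x"
        using ac fc by (simp add: B.inv_mult B.m_ac)
      ultimately show "y \<in> K" using x by simp
    qed (use A.OS_Int[OF H H1(1)] in simp)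
  qed
qed

lemma ext_exists:
  assumes A: "ltg G T" and B: "ltg G2 T2" and h: "\<phi> \<in> hom G G2" and c: "continuous_map T T2 \<phi>"
  shows "\<exists>fh. top_hom (compl G T) (compl_top G T) (compl G2 T2) (compl_top G2 T2) fh
           \<and> (\<forall>g\<in>carrier G. fh (compl_map G T g) = compl_map G2 T2 (\<phi> g))"
proof -
  interpret A: ltg G T by (rule A)
  interpret B: ltg G2 T2 by (rule B)
  interpret gh: group_hom G G2 \<phi> by (unfold_locales) (rule h)
  define P where "P K = {x \<in> carrier G. \<phi> x \<in> K}" for K
  have P: "P K \<in> open_subgroups G T" if K: "K \<in> open_subgroups G2 T2" for K
  proof -
    have sK: "subgroup K G2" using B.OS_D(1)[OF K] .
    have "subgroup (P K) G"
    proof (rule A.subgroupI)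
      show "P K \<subseteq> carrier G" "P K \<noteq> {}" using subgroup.one_closed[OF sK] unfolding P_def by auto
    next
      fix a assume "a \<in> P K" then show "inv\<^bsub>G\<^esub> a \<in> P K"
        unfolding P_def using subgroup.m_inv_closed[OF sK] by auto
    next
      fix a b assume "a \<in> P K" "b \<in> P K" then show "a \<otimes>\<^bsub>G\<^esub> b \<in> P K"
        unfolding P_def using subgroup.m_closed[OF sK] by auto
    qed
    moreover have "openin T (P K)"
      using openin_continuous_map_preimage[OF c B.OS_D(2)[OF K]] A.topT unfolding P_def by simp
    ultimately show ?thesis unfolding open_subgroups_def by simp
  qed
  have Pmono: "P K1 \<subseteq> P K2" if "K1 \<subseteq> K2" for K1 K2 using that unfolding P_def by auto
  have cosmap: "K #>\<^bsub>G2\<^esub> \<phi> b = K #>\<^bsub>G2\<^esub> \<phi> a"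
    if K: "K \<in> open_subgroups G2 T2" and a: "a \<in> carrier G" and b: "b \<in> P K #>\<^bsub>G\<^esub> a" for K a b
  proof -
    have sP: "subgroup (P K) G" using A.OS_D(1)[OF P[OF K]] .
    have bc: "b \<in> carrier G" using b subgroup.elemrcos_carrier[OF sP A.is_group a] by blast
    have "b \<otimes>\<^bsub>G\<^esub> inv\<^bsub>G\<^esub> a \<in> P K" using subgroup.rcos_module_imp[OF sP A.is_group a b] .
    then have "\<phi> (b \<otimes>\<^bsub>G\<^esub> inv\<^bsub>G\<^esub> a) \<in> K" unfolding P_def by simp
    then have "\<phi> b \<otimes>\<^bsub>G2\<^esub> inv\<^bsub>G2\<^esub> \<phi> a \<in> K" using a bc by simp
    then show ?thesis using B.coset_eq_iff[OF K] a bc by simp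
  qed
  define fh where "fh z = (\<lambda>K\<in>open_subgroups G2 T2. K #>\<^bsub>G2\<^esub> \<phi> (SOME v. v \<in> z (P K)))" for z
  have keyv: "fh z K = K #>\<^bsub>G2\<^esub> \<phi> v"
    if z: "z \<in> compl_carrier G T" and K: "K \<in> open_subgroups G2 T2" and v: "v \<in> z (P K)" for z K v
  proof -
    let ?s = "SOME v. v \<in> z (P K)"
    have s: "?s \<in> z (P K)" using v by (rule someI)
    have e: "z (P K) = P K #>\<^bsub>G\<^esub> v" using A.CC_elem[OF z P[OF K] v] .
    obtain r where r: "r \<in> carrier G" "z (P K) = P K #>\<^bsub>G\<^esub> r" using A.CC_rep[OF z P[OF K]] by blast
    have vc: "v \<in> carrier G" using v r A.r_coset_subset_G[OF A.OS_D(3)[OF P[OF K]] r(1)] by auto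
    have "K #>\<^bsub>G2\<^esub> \<phi> ?s = K #>\<^bsub>G2\<^esub> \<phi> v" using cosmap[OF K vc] s e by simp
    then show ?thesis using K unfolding fh_def by simp
  qed
  have ex_v: "\<exists>v. v \<in> z H \<and> v \<in> carrier G" if z: "z \<in> compl_carrier G T" and H: "H \<in> open_subgroups G T" for z H
  proof -
    obtain r where r: "r \<in> carrier G" "z H = H #>\<^bsub>G\<^esub> r" using A.CC_rep[OF z H] by blast
    then show ?thesis using A.rcos_self[OF r(1) A.OS_D(1)[OF H]] by auto
  qed
  have fhCC: "fh z \<in> compl_carrier G2 T2" if z: "z \<in> compl_carrier G T" for z
  proof -
    have "fh z \<in> (\<Pi>\<^sub>E K\<in>open_subgroups G2 T2. rcosets\<^bsub>G2\<^esub> K)"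
    proof (rule PiE_I)
      fix K assume K: "K \<in> open_subgroups G2 T2"
      obtain v where v: "v \<in> z (P K)" "v \<in> carrier G" using ex_v[OF z P[OF K]] by blast
      show "fh z K \<in> rcosets\<^bsub>G2\<^esub> K" using keyv[OF z K v(1)] B.rcosetsI[OF B.OS_D(3)[OF K]] v(2) by simp
    qed (simp add: fh_def)
    moreover have "\<forall>K2\<in>open_subgroups G2 T2. \<forall>K1\<in>open_subgroups G2 T2. K1 \<subseteq> K2 \<longrightarrow> fh z K1 \<subseteq> fh z K2"
    proof (intro ballI impI)
      fix K1 K2 assume K2: "K2 \<in> open_subgroups G2 T2" and K1: "K1 \<in> open_subgroups G2 T2" and s: "K1 \<subseteq> K2"
      obtain v where v: "v \<in> z (P K1)" "v \<in> carrier G" using ex_v[OF z P[OF K1]] by blast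
      have v2: "v \<in> z (P K2)" using A.CC_mono[OF z P[OF K1] P[OF K2] Pmono[OF s]] v(1) by blast
      show "fh z K1 \<subseteq> fh z K2" using keyv[OF z K1 v(1)] keyv[OF z K2 v2] s
        unfolding r_coset_def by auto
    qed
    ultimately show ?thesis unfolding compl_carrier_def by simp
  qed
  have fh_hom: "fh \<in> hom (compl G T) (compl G2 T2)"
  proof (rule homI)
    fix z assume "z \<in> carrier (compl G T)" then show "fh z \<in> carrier (compl G2 T2)"
      using fhCC by (simp add: A.C_carrier B.C_carrier)
  next
    fix z w assume z': "z \<in> carrier (compl G T)" and w': "w \<in> carrier (compl G T)"
    have z: "z \<in> compl_carrier G T" and w: "w \<in> compl_carrier G T" using z' w' by (simp_all add: A.C_carrier)
    have zw: "z \<otimes>\<^bsub>compl G T\<^esub> w \<in> compl_carrier G T" using A.C_mult_CC[OF z w] by (simp add: A.C_mult')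
    show "fh (z \<otimes>\<^bsub>compl G T\<^esub> w) = fh z \<otimes>\<^bsub>compl G2 T2\<^esub> fh w"
    proof
      fix K
      show "fh (z \<otimes>\<^bsub>compl G T\<^esub> w) K = (fh z \<otimes>\<^bsub>compl G2 T2\<^esub> fh w) K"
      proof (cases "K \<in> open_subgroups G2 T2")
        case K: True
        obtain a where a: "a \<in> z (P K)" "a \<in> carrier G" using ex_v[OF z P[OF K]] by blast
        obtain b where b: "b \<in> w (P K)" "b \<in> carrier G" using ex_v[OF w P[OF K]] by blast
        have "(z \<otimes>\<^bsub>compl G T\<^esub> w) (P K) = (P K #>\<^bsub>G\<^esub> a) <#>\<^bsub>G\<^esub> (P K #>\<^bsub>G\<^esub> b)"
          using A.C_mult[OF P[OF K]] A.CC_elem[OF z P[OF K] a(1)] A.CC_elem[OF w P[OF K] b(1)] by simp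
        also have "\<dots> = P K #>\<^bsub>G\<^esub> (a \<otimes>\<^bsub>G\<^esub> b)" using A.coset_mult[OF P[OF K] a(2) b(2)] .
        finally have ab: "a \<otimes>\<^bsub>G\<^esub> b \<in> (z \<otimes>\<^bsub>compl G T\<^esub> w) (P K)"
          using A.rcos_self[of "a \<otimes>\<^bsub>G\<^esub> b" "P K"] A.OS_D(1)[OF P[OF K]] a(2) b(2) by simp
        have "fh (z \<otimes>\<^bsub>compl G T\<^esub> w) K = K #>\<^bsub>G2\<^esub> \<phi> (a \<otimes>\<^bsub>G\<^esub> b)" using keyv[OF zw K ab] .
        also have "\<dots> = (K #>\<^bsub>G2\<^esub> \<phi> a) <#>\<^bsub>G2\<^esub> (K #>\<^bsub>G2\<^esub> \<phi> b)"
          using B.coset_mult[OF K] a(2) b(2) by simp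
        also have "\<dots> = (fh z \<otimes>\<^bsub>compl G2 T2\<^esub> fh w) K"
          using keyv[OF z K a(1)] keyv[OF w K b(1)] B.C_mult[OF K] by simp
        finally show ?thesis .
      next
        case False
        then show ?thesis by (simp add: fh_def B.C_mult')
      qed
    qed
  qed
  have fh_cont: "continuous_map (compl_top G T) (compl_top G2 T2) fh"
  proof (rule B.cont_into)
    show "\<forall>x\<in>topspace (compl_top G T). fh x \<in> compl_carrier G2 T2" using fhCC A.CT_top by simp
    show "\<forall>K\<in>open_subgroups G2 T2. \<forall>x\<in>topspace (compl_top G T).
            openin (compl_top G T) {y \<in> topspace (compl_top G T). fh y K = fh x K}"
    proof (intro ballI)
      fix K x assume K: "K \<in> open_subgroups G2 T2" and x: "x \<in> topspace (compl_top G T)"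
      show "openin (compl_top G T) {y \<in> topspace (compl_top G T). fh y K = fh x K}"
      proof (subst openin_subopen, intro ballI)
        fix y0 assume y0: "y0 \<in> {y \<in> topspace (compl_top G T). fh y K = fh x K}"
        have y0c: "y0 \<in> compl_carrier G T" using y0 A.CT_top by simp
        show "\<exists>U. openin (compl_top G T) U \<and> y0 \<in> U \<and> U \<subseteq> {y \<in> topspace (compl_top G T). fh y K = fh x K}"
        proof (intro exI conjI)
          show "openin (compl_top G T) {y\<in>compl_carrier G T. y (P K) = y0 (P K)}" by (rule A.proj_open[OF P[OF K]])
          show "y0 \<in> {y\<in>compl_carrier G T. y (P K) = y0 (P K)}" using y0c by simp
          show "{y\<in>compl_carrier G T. y (P K) = y0 (P K)} \<subseteq> {y \<in> topspace (compl_top G T). fh y K = fh x K}"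
          proof
            fix y assume y: "y \<in> {y\<in>compl_carrier G T. y (P K) = y0 (P K)}"
            obtain v where v: "v \<in> y0 (P K)" "v \<in> carrier G" using ex_v[OF y0c P[OF K]] by blast
            have "fh y K = fh y0 K" using keyv[OF y0c K v(1)] keyv[of y K v] y v(1) K by simp
            then show "y \<in> {y \<in> topspace (compl_top G T). fh y K = fh x K}" using y y0 A.CT_top by simp
          qed
        qed
      qed
    qed
  qed
  have fh_c: "fh (compl_map G T g) = compl_map G2 T2 (\<phi> g)" if g: "g \<in> carrier G" for g
  proof
    fix K show "fh (compl_map G T g) K = compl_map G2 T2 (\<phi> g) K"
    proof (cases "K \<in> open_subgroups G2 T2")
      case K: True
      have "g \<in> compl_map G T g (P K)"
        using A.cm_app[OF P[OF K]] A.rcos_self[OF g A.OS_D(1)[OF P[OF K]]] by simp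
      then show ?thesis using keyv[OF A.cm_CC[OF g] K] B.cm_app[OF K] by simp
    qed (simp add: fh_def compl_map_def)
  qed
  show ?thesis
    using fh_hom fh_cont fh_c unfolding top_hom_def by blast
qed


lemma conv_parts:
  assumes "conv_cont G T G2 T2 fs f"
  shows "\<And>n. top_hom G T G2 T2 (fs n)"
    and "\<forall>g\<in>carrier G. \<forall>H'\<in>open_subgroups G2 T2. \<exists>H\<in>open_subgroups G T. \<exists>n0.
        \<forall>x\<in>H. \<forall>n\<ge>n0. fs n (g \<otimes>\<^bsub>G\<^esub> x) \<otimes>\<^bsub>G2\<^esub> inv\<^bsub>G2\<^esub> (f (g \<otimes>\<^bsub>G\<^esub> x)) \<in> H'"
  using assms unfolding conv_cont_def by (elim conjE; simp)+

lemma part2: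
  assumes A: "ltg G T" and B: "ltg G2 T2" and h: "f \<in> hom G G2"
    and conv: "conv_cont G T G2 T2 fs f"
  shows "conv_cont G T (compl G2 T2) (compl_top G2 T2) (\<lambda>n. compl_map G2 T2 \<circ> fs n) (compl_map G2 T2 \<circ> f)"
proof -
  interpret A: ltg G T by (rule A)
  interpret B: ltg G2 T2 by (rule B)
  interpret C2: comm_group "compl G2 T2" by (rule B.C_comm_group)
  note th = conv_parts(1)[OF conv] and cv = conv_parts(2)[OF conv]
  show ?thesis unfolding conv_cont_def
  proof (intro conjI allI ballI)
    fix n show "top_hom G T (compl G2 T2) (compl_top G2 T2) (compl_map G2 T2 \<circ> fs n)"
      using th[of n] hom_compose[OF _ B.cm_hom] continuous_map_compose[OF _ B.cm_cont]
      unfolding top_hom_def by blast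
  next
    fix g H'' assume g: "g \<in> carrier G" and H'': "H'' \<in> open_subgroups (compl G2 T2) (compl_top G2 T2)"
    have sH: "subgroup H'' (compl G2 T2)" "openin (compl_top G2 T2) H''" using H'' unfolding open_subgroups_def by auto
    have one: "\<one>\<^bsub>compl G2 T2\<^esub> \<in> H''" using subgroup.one_closed[OF sH(1)] .
    obtain K where K: "K \<in> open_subgroups G2 T2"
      "\<forall>w\<in>compl_carrier G2 T2. w K = \<one>\<^bsub>compl G2 T2\<^esub> K \<longrightarrow> w \<in> H''"
      using B.nbhd[OF sH(2) one] by blast
    have oneK: "\<one>\<^bsub>compl G2 T2\<^esub> K = K" using B.C_one K(1) by simp
    obtain H n0 where H: "H \<in> open_subgroups G T"
      and Hn: "\<forall>x\<in>H. \<forall>n\<ge>n0. fs n (g \<otimes>\<^bsub>G\<^esub> x) \<otimes>\<^bsub>G2\<^esub> inv\<^bsub>G2\<^esub> (f (g \<otimes>\<^bsub>G\<^esub> x)) \<in> K"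
      using cv g K(1) by meson
    show "\<exists>H\<in>open_subgroups G T. \<exists>n0. \<forall>x\<in>H. \<forall>n\<ge>n0.
            (compl_map G2 T2 \<circ> fs n) (g \<otimes>\<^bsub>G\<^esub> x) \<otimes>\<^bsub>compl G2 T2\<^esub>
            inv\<^bsub>compl G2 T2\<^esub> (compl_map G2 T2 \<circ> f) (g \<otimes>\<^bsub>G\<^esub> x) \<in> H''"
    proof (intro bexI exI ballI allI impI)
      fix x n assume x: "x \<in> H" and n: "n0 \<le> n"
      have yc: "g \<otimes>\<^bsub>G\<^esub> x \<in> carrier G" using x g A.OS_D(3)[OF H] by blast
      have hn: "fs n \<in> hom G G2" using th[of n] unfolding top_hom_def by blast
      have ac: "fs n (g \<otimes>\<^bsub>G\<^esub> x) \<in> carrier G2" using hom_in_carrier[OF hn yc] .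
      have bc: "f (g \<otimes>\<^bsub>G\<^esub> x) \<in> carrier G2" using hom_in_carrier[OF h yc] .
      have d: "fs n (g \<otimes>\<^bsub>G\<^esub> x) \<otimes>\<^bsub>G2\<^esub> inv\<^bsub>G2\<^esub> (f (g \<otimes>\<^bsub>G\<^esub> x)) \<in> K" using Hn x n by blast
      have ca: "compl_map G2 T2 (fs n (g \<otimes>\<^bsub>G\<^esub> x)) \<in> compl_carrier G2 T2" using B.cm_CC[OF ac] .
      have cb: "compl_map G2 T2 (f (g \<otimes>\<^bsub>G\<^esub> x)) \<in> compl_carrier G2 T2" using B.cm_CC[OF bc] .
      have w: "compl_map G2 T2 (fs n (g \<otimes>\<^bsub>G\<^esub> x)) \<otimes>\<^bsub>compl G2 T2\<^esub> inv\<^bsub>compl G2 T2\<^esub> compl_map G2 T2 (f (g \<otimes>\<^bsub>G\<^esub> x))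
          \<in> compl_carrier G2 T2"
        using C2.m_closed[OF _ C2.inv_closed] ca cb by (simp add: B.C_carrier)
      have "(compl_map G2 T2 (fs n (g \<otimes>\<^bsub>G\<^esub> x)) \<otimes>\<^bsub>compl G2 T2\<^esub> inv\<^bsub>compl G2 T2\<^esub> compl_map G2 T2 (f (g \<otimes>\<^bsub>G\<^esub> x))) K = K"
        using B.diff_coord[OF ca cb K(1)] B.cm_eq_iff[OF K(1) ac bc] d by simp
      then show "(compl_map G2 T2 \<circ> fs n) (g \<otimes>\<^bsub>G\<^esub> x) \<otimes>\<^bsub>compl G2 T2\<^esub>
            inv\<^bsub>compl G2 T2\<^esub> (compl_map G2 T2 \<circ> f) (g \<otimes>\<^bsub>G\<^esub> x) \<in> H''"
        using K(2) w oneK by simp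
    qed (rule H)
  qed
qed

lemma part4:
  assumes A: "ltg G T" and B: "ltg G2 T2" and h: "f \<in> hom G G2"
    and conv: "conv_cont G T G2 T2 fs f"
    and fhs_hom: "\<And>n. top_hom (compl G T) (compl_top G T) (compl G2 T2) (compl_top G2 T2) (fhs n)"
    and fhs_c: "\<And>n g. g \<in> carrier G \<Longrightarrow> fhs n (compl_map G T g) = compl_map G2 T2 (fs n g)"
    and fh_hom: "top_hom (compl G T) (compl_top G T) (compl G2 T2) (compl_top G2 T2) fh"
    and fh_c: "\<forall>g\<in>carrier G. fh (compl_map G T g) = compl_map G2 T2 (f g)"
  shows "conv_cont (compl G T) (compl_top G T) (compl G2 T2) (compl_top G2 T2) fhs fh"
proof -
  interpret A: ltg G T by (rule A)
  interpret B: ltg G2 T2 by (rule B)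
  interpret C1: comm_group "compl G T" by (rule A.C_comm_group)
  interpret C2: comm_group "compl G2 T2" by (rule B.C_comm_group)
  note th = conv_parts(1)[OF conv] and cv = conv_parts(2)[OF conv]
  have hn: "fs n \<in> hom G G2" for n using th[of n] unfolding top_hom_def by blast
  show ?thesis unfolding conv_cont_def
  proof (intro conjI allI ballI)
    fix n show "top_hom (compl G T) (compl_top G T) (compl G2 T2) (compl_top G2 T2) (fhs n)" by (rule fhs_hom)
  next
    fix x H'' assume x': "x \<in> carrier (compl G T)" and H'': "H'' \<in> open_subgroups (compl G2 T2) (compl_top G2 T2)"
    have xc: "x \<in> compl_carrier G T" using x' by (simp add: A.C_carrier)
    have sH: "subgroup H'' (compl G2 T2)" "openin (compl_top G2 T2) H''" using H'' unfolding open_subgroups_def by auto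
    have one: "\<one>\<^bsub>compl G2 T2\<^esub> \<in> H''" using subgroup.one_closed[OF sH(1)] .
    obtain K where K: "K \<in> open_subgroups G2 T2"
      "\<forall>w\<in>compl_carrier G2 T2. w K = \<one>\<^bsub>compl G2 T2\<^esub> K \<longrightarrow> w \<in> H''"
      using B.nbhd[OF sH(2) one] by blast
    have oneK: "\<one>\<^bsub>compl G2 T2\<^esub> K = K" using B.C_one K(1) by simp
    obtain H1 n1 where H1: "H1 \<in> open_subgroups G T"
      and H1n: "\<forall>v\<in>H1. \<forall>n\<ge>n1. fs n (\<one>\<^bsub>G\<^esub> \<otimes>\<^bsub>G\<^esub> v) \<otimes>\<^bsub>G2\<^esub> inv\<^bsub>G2\<^esub> (f (\<one>\<^bsub>G\<^esub> \<otimes>\<^bsub>G\<^esub> v)) \<in> K"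
      using cv K(1) by (meson A.one_closed)
    obtain u where u: "u \<in> carrier G" "x H1 = H1 #>\<^bsub>G\<^esub> u" using A.CC_rep[OF xc H1] by blast
    obtain H2 n2 where H2: "H2 \<in> open_subgroups G T"
      and H2n: "\<forall>v\<in>H2. \<forall>n\<ge>n2. fs n (u \<otimes>\<^bsub>G\<^esub> v) \<otimes>\<^bsub>G2\<^esub> inv\<^bsub>G2\<^esub> (f (u \<otimes>\<^bsub>G\<^esub> v)) \<in> K"
      using cv K(1) u(1) by meson
    have sK: "subgroup K G2" using B.OS_D(1)[OF K(1)] .
    have good: "K #>\<^bsub>G2\<^esub> fs n v = K #>\<^bsub>G2\<^esub> f v"
      if v: "v \<in> H1 #>\<^bsub>G\<^esub> u" and n: "max n1 n2 \<le> n" for v n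
    proof -
      obtain k where k: "k \<in> H1" "v = k \<otimes>\<^bsub>G\<^esub> u" using v unfolding r_coset_def by blast
      have kc: "k \<in> carrier G" using k A.OS_D(3)[OF H1] by blast
      have d1: "fs n k \<otimes>\<^bsub>G2\<^esub> inv\<^bsub>G2\<^esub> (f k) \<in> K" using H1n k(1) kc n by auto
      have "fs n (u \<otimes>\<^bsub>G\<^esub> \<one>\<^bsub>G\<^esub>) \<otimes>\<^bsub>G2\<^esub> inv\<^bsub>G2\<^esub> (f (u \<otimes>\<^bsub>G\<^esub> \<one>\<^bsub>G\<^esub>)) \<in> K"
        using H2n subgroup.one_closed[OF A.OS_D(1)[OF H2]] n by auto
      then have d2: "fs n u \<otimes>\<^bsub>G2\<^esub> inv\<^bsub>G2\<^esub> (f u) \<in> K" using u(1) by simp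
      have vc: "v \<in> carrier G" using k kc u(1) by simp
      have c1: "fs n k \<in> carrier G2" "fs n u \<in> carrier G2" "f k \<in> carrier G2" "f u \<in> carrier G2"
        using hom_in_carrier[OF hn] hom_in_carrier[OF h] kc u(1) by auto
      have "fs n v \<otimes>\<^bsub>G2\<^esub> inv\<^bsub>G2\<^esub> (f v) =
            (fs n k \<otimes>\<^bsub>G2\<^esub> inv\<^bsub>G2\<^esub> (f k)) \<otimes>\<^bsub>G2\<^esub> (fs n u \<otimes>\<^bsub>G2\<^esub> inv\<^bsub>G2\<^esub> (f u))"
        using k(2) hom_mult[OF hn kc u(1)] hom_mult[OF h kc u(1)] c1 by (simp add: B.inv_mult B.m_ac)
      then have "fs n v \<otimes>\<^bsub>G2\<^esub> inv\<^bsub>G2\<^esub> (f v) \<in> K" using subgroup.m_closed[OF sK d1 d2] by simp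
      then show ?thesis using B.coset_eq_iff[OF K(1)] hom_in_carrier[OF hn vc] hom_in_carrier[OF h vc] by simp
    qed
    have fhs_cont: "continuous_map (compl_top G T) (compl_top G2 T2) (fhs n)" for n
      using fhs_hom[of n] unfolding top_hom_def by blast
    have fh_cont: "continuous_map (compl_top G T) (compl_top G2 T2) fh" using fh_hom unfolding top_hom_def by blast
    have fhs_h: "fhs n \<in> hom (compl G T) (compl G2 T2)" for n using fhs_hom[of n] unfolding top_hom_def by blast
    have fh_h: "fh \<in> hom (compl G T) (compl G2 T2)" using fh_hom unfolding top_hom_def by blast
    show "\<exists>H\<in>open_subgroups (compl G T) (compl_top G T). \<exists>n0. \<forall>y\<in>H. \<forall>n\<ge>n0.
            fhs n (x \<otimes>\<^bsub>compl G T\<^esub> y) \<otimes>\<^bsub>compl G2 T2\<^esub> inv\<^bsub>compl G2 T2\<^esub> fh (x \<otimes>\<^bsub>compl G T\<^esub> y) \<in> H''"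
    proof (intro bexI exI ballI allI impI)
      fix y n assume y: "y \<in> {y\<in>compl_carrier G T. y H1 = H1}" and n: "max n1 n2 \<le> n"
      let ?z = "x \<otimes>\<^bsub>compl G T\<^esub> y"
      have zc: "?z \<in> compl_carrier G T" using C1.m_closed xc y by (simp add: A.C_carrier)
      have "?z H1 = (H1 #>\<^bsub>G\<^esub> u) <#>\<^bsub>G\<^esub> (H1 #>\<^bsub>G\<^esub> \<one>\<^bsub>G\<^esub>)"
        using A.C_mult[OF H1] u(2) y A.coset_mult_one[OF A.OS_D(3)[OF H1]] by simp
      also have "\<dots> = H1 #>\<^bsub>G\<^esub> u" using A.coset_mult[OF H1 u(1)] u(1) by simp
      finally have zH1: "?z H1 = H1 #>\<^bsub>G\<^esub> u" .
      have fzc: "fhs n ?z \<in> compl_carrier G2 T2" "fh ?z \<in> compl_carrier G2 T2"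
        using hom_in_carrier[OF fhs_h] hom_in_carrier[OF fh_h] zc by (auto simp: A.C_carrier B.C_carrier)
      define S1 where "S1 = {w \<in> topspace (compl_top G T). fhs n w \<in> {w'\<in>compl_carrier G2 T2. w' K = fhs n ?z K}}"
      define S2 where "S2 = {w \<in> topspace (compl_top G T). fh w \<in> {w'\<in>compl_carrier G2 T2. w' K = fh ?z K}}"
      have "openin (compl_top G T) S1" unfolding S1_def
        by (rule openin_continuous_map_preimage[OF fhs_cont B.proj_open[OF K(1)]])
      moreover have "openin (compl_top G T) S2" unfolding S2_def
        by (rule openin_continuous_map_preimage[OF fh_cont B.proj_open[OF K(1)]])
      ultimately have oS: "openin (compl_top G T) (S1 \<inter> S2)" by blast
      have zS: "?z \<in> S1 \<inter> S2" using zc fzc A.CT_top unfolding S1_def S2_def by simp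
      obtain H3 where H3: "H3 \<in> open_subgroups G T" "\<forall>w\<in>compl_carrier G T. w H3 = ?z H3 \<longrightarrow> w \<in> S1 \<inter> S2"
        using A.nbhd[OF oS zS] by blast
      have H4: "H3 \<inter> H1 \<in> open_subgroups G T" using A.OS_Int[OF H3(1) H1] .
      obtain v where v: "v \<in> carrier G" "?z (H3 \<inter> H1) = (H3 \<inter> H1) #>\<^bsub>G\<^esub> v" using A.CC_rep[OF zc H4] by blast
      have cmv: "compl_map G T v \<in> compl_carrier G T" using A.cm_CC[OF v(1)] .
      have agree4: "compl_map G T v (H3 \<inter> H1) = ?z (H3 \<inter> H1)" using A.cm_app[OF H4] v(2) by simp
      have "compl_map G T v H3 = ?z H3" using A.CC_agree[OF cmv zc H4 H3(1) _ agree4] by blast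
      then have "compl_map G T v \<in> S1 \<inter> S2" using H3(2) cmv by blast
      then have e1: "fhs n (compl_map G T v) K = fhs n ?z K" and e2: "fh (compl_map G T v) K = fh ?z K"
        unfolding S1_def S2_def by auto
      have "compl_map G T v H1 = ?z H1" using A.CC_agree[OF cmv zc H4 H1 _ agree4] by blast
      then have "H1 #>\<^bsub>G\<^esub> v = H1 #>\<^bsub>G\<^esub> u" using A.cm_app[OF H1] zH1 by simp
      then have vH: "v \<in> H1 #>\<^bsub>G\<^esub> u" using A.rcos_self[OF v(1) A.OS_D(1)[OF H1]] by simp
      have "fhs n ?z K = K #>\<^bsub>G2\<^esub> fs n v" using e1 fhs_c[OF v(1)] B.cm_app[OF K(1)] by simp
      also have "\<dots> = K #>\<^bsub>G2\<^esub> f v" using good[OF vH n] .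
      also have "\<dots> = fh ?z K" using e2 fh_c v(1) B.cm_app[OF K(1)] by simp
      finally have eq: "fhs n ?z K = fh ?z K" .
      have w: "fhs n ?z \<otimes>\<^bsub>compl G2 T2\<^esub> inv\<^bsub>compl G2 T2\<^esub> fh ?z \<in> compl_carrier G2 T2"
        using C2.m_closed[OF _ C2.inv_closed] fzc by (simp add: B.C_carrier)
      have "(fhs n ?z \<otimes>\<^bsub>compl G2 T2\<^esub> inv\<^bsub>compl G2 T2\<^esub> fh ?z) K = K"
        using B.diff_coord[OF fzc K(1)] eq by simp
      then show "fhs n ?z \<otimes>\<^bsub>compl G2 T2\<^esub> inv\<^bsub>compl G2 T2\<^esub> fh ?z \<in> H''"
        using K(2) w oneK by simp
    qed (rule A.V_OS[OF H1])
  qed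
qed

theorem lemma1p10:
  fixes G :: "('a,'c) monoid_scheme" and T :: "'a topology"
    and G' :: "('b,'d) monoid_scheme" and T' :: "'b topology"
    and fs :: "nat \<Rightarrow> 'a \<Rightarrow> 'b" and f :: "'a \<Rightarrow> 'b"
    and fhs :: "nat \<Rightarrow> ('a set \<Rightarrow> 'a set) \<Rightarrow> ('b set \<Rightarrow> 'b set)"
  assumes G: "lin_top_group G T"
    and G': "lin_top_group G' T'" and sep: "Hausdorff_space T'"
    and f_hom: "f \<in> hom G G'"
    and fhs_hom: "\<And>n. top_hom (compl G T) (compl_top G T) (compl G' T') (compl_top G' T') (fhs n)"
    and fhs_c: "\<And>n g. g \<in> carrier G \<Longrightarrow> fhs n (compl_map G T g) = compl_map G' T' (fs n g)"
    and conv: "conv_cont G T G' T' fs f"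
  shows "top_hom G T (compl G' T') (compl_top G' T') (compl_map G' T' \<circ> f)
       \<and> conv_cont G T (compl G' T') (compl_top G' T')
            (\<lambda>n. compl_map G' T' \<circ> fs n) (compl_map G' T' \<circ> f)
       \<and> (\<exists>fh. top_hom (compl G T) (compl_top G T) (compl G' T') (compl_top G' T') fh
              \<and> (\<forall>g\<in>carrier G. fh (compl_map G T g) = compl_map G' T' (f g)))
       \<and> (\<forall>fh. top_hom (compl G T) (compl_top G T) (compl G' T') (compl_top G' T') fh
              \<and> (\<forall>g\<in>carrier G. fh (compl_map G T g) = compl_map G' T' (f g))
              \<longrightarrow> conv_cont (compl G T) (compl_top G T) (compl G' T') (compl_top G' T') fhs fh)"
proof -
  have A: "ltg G T" by (rule ltgI[OF G])
  have B: "ltg G' T'" by (rule ltgI[OF G'])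
  interpret B: ltg G' T' by (rule B)
  have fc: "continuous_map T T' f" by (rule conv_f_cont[OF A B f_hom conv])
  have p1: "top_hom G T (compl G' T') (compl_top G' T') (compl_map G' T' \<circ> f)"
    unfolding top_hom_def using hom_compose[OF f_hom B.cm_hom] continuous_map_compose[OF fc B.cm_cont] by blast
  have p2: "conv_cont G T (compl G' T') (compl_top G' T') (\<lambda>n. compl_map G' T' \<circ> fs n) (compl_map G' T' \<circ> f)"
    by (rule part2[OF A B f_hom conv])
  have p3: "\<exists>fh. top_hom (compl G T) (compl_top G T) (compl G' T') (compl_top G' T') fh
              \<and> (\<forall>g\<in>carrier G. fh (compl_map G T g) = compl_map G' T' (f g))"
    by (rule ext_exists[OF A B f_hom fc])
  have p4: "\<forall>fh. top_hom (compl G T) (compl_top G T) (compl G' T') (compl_top G' T') fh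
              \<and> (\<forall>g\<in>carrier G. fh (compl_map G T g) = compl_map G' T' (f g))
              \<longrightarrow> conv_cont (compl G T) (compl_top G T) (compl G' T') (compl_top G' T') fhs fh"
  proof (intro allI impI)
    fix fh assume a: "top_hom (compl G T) (compl_top G T) (compl G' T') (compl_top G' T') fh
              \<and> (\<forall>g\<in>carrier G. fh (compl_map G T g) = compl_map G' T' (f g))"
    show "conv_cont (compl G T) (compl_top G T) (compl G' T') (compl_top G' T') fhs fh"
      using part4[OF A B f_hom conv fhs_hom fhs_c] a by blast
  qed
  show ?thesis using p1 p2 p3 p4 by (intro conjI)
qed

end
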